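(* Let $M,N,Q$ be positive integers with $M\ge 2N$, let $S=\{\vec b\in\mathbb{F}_2^M: H(\vec b)=N\}$, and let $\mathbf{G}\in\mathbb{F}_2^{Q\times M}$ be such that the map $\vec b\mapsto\mathbf{G}\vec b$ (over $\mathbb{F}_2$) is injective on $S$. Then every nonzero $\vec k\in\ker\mathbf{G}$ whose Hamming weight $H(\vec k)$ is even satisfies $H(\vec k)\ge 2N+2$.
   Context: $H(\vec v)$ denotes the Hamming weight (number of nonzero entries) of a binary vector $\vec v$; $\ker\mathbf{G}=\{\vec k\in\mathbb{F}_2^M:\mathbf{G}\vec k=\vec 0\}$. A matrix $\mathbf{G}$ injective on $S$ is called a number-conserving linear encoding of $M$ fermionic modes with $N$ particles. *)

theory Defs
  imports "HOL-Analysis.Analysis" "HOL-Library.Z2"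
begin

text \<open>Vectors over F_2 of length M are modelled as bit ^ 'm with M = CARD('m);
  a Q x M matrix over F_2 is bit ^ 'm ^ 'q.\<close>

definition hamming_weight :: "bit ^ 'n \<Rightarrow> nat" where
  "hamming_weight v = card {i. v $ i \<noteq> 0}"

end

theory Submission
  imports Defs
begin

definition vs :: "'m set \<Rightarrow> bit ^ 'm" where
  "vs S = (\<chi> i. if i \<in> S then 1 else 0)"

lemma hw_vs: "hamming_weight (vs S) = card S"
  unfolding hamming_weight_def vs_def by simp

theorem lemma1:
  fixes G :: "bit ^ 'm ^ 'q" and N :: nat
  assumes "N > 0"
    and "CARD('m) \<ge> 2 * N"
    and "inj_on (\<lambda>b. G *v b) {b :: bit ^ 'm. hamming_weight b = N}"
  shows "\<forall>k. G *v k = 0 \<and> k \<noteq> 0 \<and> even (hamming_weight k) \<longrightarrow> hamming_weight k \<ge> 2 * N + 2"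
proof (intro allI impI, rule ccontr)
  fix k :: "bit ^ 'm"
  assume h: "G *v k = 0 \<and> k \<noteq> 0 \<and> even (hamming_weight k)"
    and nle: "\<not> hamming_weight k \<ge> 2 * N + 2"
  define K where "K = {i. k $ i \<noteq> 0}"
  have hwK: "hamming_weight k = card K" unfolding K_def hamming_weight_def by simp
  obtain j where cK: "card K = 2 * j" using h hwK by (metis evenE)
  have jN: "j \<le> N" using nle cK hwK by linarith
  have "K \<noteq> {}" using h unfolding K_def by (metis (mono_tags, lifting) empty_Collect_eq vec_eq_iff zero_index)
  hence "j \<ge> 1" using cK by (metis One_nat_def Suc_leI card_0_eq finite mult_0_right neq0_conv)
  obtain A where A: "A \<subseteq> K" "card A = j"
    using obtain_subset_with_card_n[of j K] cK by auto
  define B where "B = K - A"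
  have cB: "card B = j" unfolding B_def using A cK by (simp add: card_Diff_subset finite_subset)
  have "card (UNIV - K) = CARD('m) - 2 * j" using cK by (simp add: card_Diff_subset)
  hence "N - j \<le> card (UNIV - K)" using assms(2) jN by linarith
  then obtain C where C: "C \<subseteq> UNIV - K" "card C = N - j"
    using obtain_subset_with_card_n by metis
  have c1: "card (A \<union> C) = N"
    using A C jN by (subst card_Un_disjoint) auto
  have c2: "card (B \<union> C) = N"
    using cB C jN unfolding B_def by (subst card_Un_disjoint) auto
  have kk: "k = vs (A \<union> C) - vs (B \<union> C)"
  proof (rule vec_eq_iff[THEN iffD2], rule allI)
    fix i
    show "k $ i = (vs (A \<union> C) - vs (B \<union> C)) $ i"
      using A C unfolding vs_def B_def K_def by auto
  qed
  have "G *v vs (A \<union> C) = G *v vs (B \<union> C)"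
  proof -
    have "G *v vs (A \<union> C) - G *v vs (B \<union> C) = 0"
      using h kk by (simp add: matrix_vector_mult_diff_distrib)
    thus ?thesis by simp
  qed
  hence eq: "vs (A \<union> C) = vs (B \<union> C)"
    using assms(3) c1 c2 hw_vs unfolding inj_on_def by (metis (mono_tags, lifting) mem_Collect_eq)
  obtain a where a: "a \<in> A" using A \<open>j \<ge> 1\<close> by fastforce
  have "vs (A \<union> C) $ a = 1" using a unfolding vs_def by simp
  moreover have "vs (B \<union> C) $ a = 0" using a C A unfolding vs_def B_def by auto
  ultimately show False using eq by simp
qed

end
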